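(* Let $T:\mathcal{A}\to\mathcal{A}$ be a Markov operator on a von Neumann algebra $\mathcal{A}\subseteq\mathcal{B}(\mathcal{H})$. The set of potentials for $T$ is a norm-closed cone in $\mathcal{A}_+$ which is invariant under $T$.
   Context: A Markov operator is a normal completely positive unital linear map on $\mathcal{A}$ ($\mathbbm{1}\in\mathcal{A}$). $x\in\mathcal{A}_+$ is $T$-summable if $\sum_{n\ge0}T^n(x)$ converges strongly to an element of $\mathcal{A}_+$; $y\in\mathcal{A}_+$ is a potential for $T$ if $y=\sum_{n\ge0}T^n(x)$ for some $T$-summable $x\in\mathcal{A}_+$. *)

theory Defs
  imports "HOL-Analysis.Analysis"
begin

text \<open>A complex Hilbert space H is the same thing as a real Hilbert space (real inner
  product = real part of the complex inner product) together with the real-linear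
  isometry iunit (multiplication by the imaginary unit), with iunit (iunit x) = - x.
  The complex inner product is recovered as cinner x y = inner x y + i * inner x (iunit y)
  (linear in the first argument).\<close>

class chilbert = real_inner + complete_space +
  fixes iunit :: "'a \<Rightarrow> 'a"
  assumes iunit_add: "iunit (x + y) = iunit x + iunit y"
    and iunit_scaleR: "iunit (r *\<^sub>R x) = r *\<^sub>R iunit x"
    and iunit_iunit: "iunit (iunit x) = - x"
    and inner_iunit: "inner (iunit x) (iunit y) = inner x y"

definition cinner :: "'h::chilbert \<Rightarrow> 'h \<Rightarrow> complex" where
  "cinner x y = Complex (inner x y) (inner x (iunit y))"

definition cscale :: "complex \<Rightarrow> 'h::chilbert \<Rightarrow> 'h" where
  "cscale c x = Re c *\<^sub>R x + Im c *\<^sub>R iunit x"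

definition bop :: "('h::chilbert \<Rightarrow> 'h) set" where
  "bop = {a. bounded_linear a \<and> (\<forall>x. a (iunit x) = iunit (a x))}"

definition adj_op :: "('h::chilbert \<Rightarrow> 'h) \<Rightarrow> ('h \<Rightarrow> 'h)" where
  "adj_op a = (THE b. b \<in> bop \<and> (\<forall>x y. cinner (a x) y = cinner x (b y)))"

definition op_add :: "('h::chilbert \<Rightarrow> 'h) \<Rightarrow> ('h \<Rightarrow> 'h) \<Rightarrow> ('h \<Rightarrow> 'h)" where
  "op_add a b = (\<lambda>h. a h + b h)"

definition op_diff :: "('h::chilbert \<Rightarrow> 'h) \<Rightarrow> ('h \<Rightarrow> 'h) \<Rightarrow> ('h \<Rightarrow> 'h)" where
  "op_diff a b = (\<lambda>h. a h - b h)"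

definition op_scale :: "complex \<Rightarrow> ('h::chilbert \<Rightarrow> 'h) \<Rightarrow> ('h \<Rightarrow> 'h)" where
  "op_scale c a = (\<lambda>h. cscale c (a h))"

text \<open>Operator norm (real and complex operator norms coincide).\<close>
definition op_norm :: "('h::chilbert \<Rightarrow> 'h) \<Rightarrow> real" where
  "op_norm a = onorm a"

definition commutant :: "('h::chilbert \<Rightarrow> 'h) set \<Rightarrow> ('h \<Rightarrow> 'h) set" where
  "commutant S = {b \<in> bop. \<forall>a\<in>S. a \<circ> b = b \<circ> a}"

text \<open>A von Neumann algebra: a self-adjoint set of bounded operators equal to its
  bicommutant (equivalently, a unital *-subalgebra of B(H) closed in the strong
  operator topology).\<close>
definition von_neumann_algebra :: "('h::chilbert \<Rightarrow> 'h) set \<Rightarrow> bool" where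
  "von_neumann_algebra A \<longleftrightarrow>
     A \<subseteq> bop \<and> (\<forall>a\<in>A. adj_op a \<in> A) \<and> commutant (commutant A) = A"

definition pos_op :: "('h::chilbert \<Rightarrow> 'h) \<Rightarrow> bool" where
  "pos_op a \<longleftrightarrow> a \<in> bop \<and> (\<forall>h. cinner (a h) h \<in> \<real> \<and> 0 \<le> Re (cinner (a h) h))"

definition pos_part :: "('h::chilbert \<Rightarrow> 'h) set \<Rightarrow> ('h \<Rightarrow> 'h) set" where
  "pos_part A = {a \<in> A. pos_op a}"

definition op_le :: "('h::chilbert \<Rightarrow> 'h) \<Rightarrow> ('h \<Rightarrow> 'h) \<Rightarrow> bool" where
  "op_le a b \<longleftrightarrow> pos_op (op_diff b a)"

text \<open>Positivity of an n x n operator matrix [a i j] as an operator on H^n.\<close>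
definition mat_pos :: "nat \<Rightarrow> (nat \<Rightarrow> nat \<Rightarrow> ('h::chilbert \<Rightarrow> 'h)) \<Rightarrow> bool" where
  "mat_pos n a \<longleftrightarrow> (\<forall>i<n. \<forall>j<n. a i j \<in> bop) \<and>
     (\<forall>h::nat \<Rightarrow> 'h. let q = (\<Sum>i<n. \<Sum>j<n. cinner (a i j (h j)) (h i)) in q \<in> \<real> \<and> 0 \<le> Re q)"

definition self_adjoint_part :: "('h::chilbert \<Rightarrow> 'h) set \<Rightarrow> ('h \<Rightarrow> 'h) set" where
  "self_adjoint_part A = {a \<in> A. adj_op a = a}"

definition is_sup_in :: "('h::chilbert \<Rightarrow> 'h) set \<Rightarrow> ('h \<Rightarrow> 'h) set \<Rightarrow> ('h \<Rightarrow> 'h) \<Rightarrow> bool" where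
  "is_sup_in A D x \<longleftrightarrow> x \<in> self_adjoint_part A \<and> (\<forall>d\<in>D. op_le d x) \<and>
     (\<forall>z\<in>self_adjoint_part A. (\<forall>d\<in>D. op_le d z) \<longrightarrow> op_le x z)"

definition linear_on :: "('h::chilbert \<Rightarrow> 'h) set \<Rightarrow> (('h \<Rightarrow> 'h) \<Rightarrow> ('h \<Rightarrow> 'h)) \<Rightarrow> bool" where
  "linear_on A T \<longleftrightarrow> (\<forall>a\<in>A. \<forall>b\<in>A. T (op_add a b) = op_add (T a) (T b)) \<and>
     (\<forall>c. \<forall>a\<in>A. T (op_scale c a) = op_scale c (T a))"

definition completely_positive_on :: "('h::chilbert \<Rightarrow> 'h) set \<Rightarrow> (('h \<Rightarrow> 'h) \<Rightarrow> ('h \<Rightarrow> 'h)) \<Rightarrow> bool" where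
  "completely_positive_on A T \<longleftrightarrow>
     (\<forall>n a. (\<forall>i<n. \<forall>j<n. a i j \<in> A) \<longrightarrow> mat_pos n a \<longrightarrow> mat_pos n (\<lambda>i j. T (a i j)))"

text \<open>Normal: T(sup x_alpha) = sup T(x_alpha) for every bounded increasing net in A_+.
  An increasing net is represented by its (upward directed) set of values D, which has
  the same supremum; boundedness is implied by the existence of the supremum.\<close>
definition normal_on :: "('h::chilbert \<Rightarrow> 'h) set \<Rightarrow> (('h \<Rightarrow> 'h) \<Rightarrow> ('h \<Rightarrow> 'h)) \<Rightarrow> bool" where
  "normal_on A T \<longleftrightarrow>
     (\<forall>D x. D \<noteq> {} \<and> D \<subseteq> pos_part A \<and>
        (\<forall>a\<in>D. \<forall>b\<in>D. \<exists>c\<in>D. op_le a c \<and> op_le b c) \<and> is_sup_in A D x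
        \<longrightarrow> is_sup_in A (T ` D) (T x))"

definition markov_operator :: "('h::chilbert \<Rightarrow> 'h) set \<Rightarrow> (('h \<Rightarrow> 'h) \<Rightarrow> ('h \<Rightarrow> 'h)) \<Rightarrow> bool" where
  "markov_operator A T \<longleftrightarrow> T ` A \<subseteq> A \<and> linear_on A T \<and> completely_positive_on A T \<and>
     normal_on A T \<and> T id = id"

definition strong_sums :: "(nat \<Rightarrow> ('h::chilbert \<Rightarrow> 'h)) \<Rightarrow> ('h \<Rightarrow> 'h) \<Rightarrow> bool" where
  "strong_sums s y \<longleftrightarrow> (\<forall>h. (\<lambda>N. \<Sum>n<N. s n h) \<longlonglongrightarrow> y h)"

definition T_summable :: "('h::chilbert \<Rightarrow> 'h) set \<Rightarrow> (('h \<Rightarrow> 'h) \<Rightarrow> ('h \<Rightarrow> 'h)) \<Rightarrow> ('h \<Rightarrow> 'h) \<Rightarrow> bool" where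
  "T_summable A T x \<longleftrightarrow> x \<in> pos_part A \<and> (\<exists>y\<in>pos_part A. strong_sums (\<lambda>n. (T ^^ n) x) y)"

definition potentials :: "('h::chilbert \<Rightarrow> 'h) set \<Rightarrow> (('h \<Rightarrow> 'h) \<Rightarrow> ('h \<Rightarrow> 'h)) \<Rightarrow> ('h \<Rightarrow> 'h) set" where
  "potentials A T = {y \<in> pos_part A. \<exists>x. T_summable A T x \<and> strong_sums (\<lambda>n. (T ^^ n) x) y}"

end

theory Submission
  imports Defs
begin

lemma iunit_linear: "linear (iunit :: 'h::chilbert \<Rightarrow> 'h)"
  by (rule linearI) (simp_all add: iunit_add iunit_scaleR)

lemma iunit_zero[simp]: "iunit (0::'h::chilbert) = 0"
  using linear_0[OF iunit_linear] by simp
lemma iunit_minus[simp]: "iunit (- x::'h::chilbert) = - iunit x"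
  by (rule linear_neg[OF iunit_linear])
lemma iunit_diff: "iunit (x - y::'h::chilbert) = iunit x - iunit y"
  by (rule linear_diff[OF iunit_linear])
lemma iunit_sum: "iunit (\<Sum>i\<in>I. f i::'h::chilbert) = (\<Sum>i\<in>I. iunit (f i))"
  using linear_sum[OF iunit_linear] by simp

lemma inner_iunit_left: "inner (iunit x) (y::'h::chilbert) = - inner x (iunit y)"
  by (metis inner_iunit iunit_iunit inner_minus_left)

lemma inner_iunit_self[simp]: "inner x (iunit (x::'h::chilbert)) = 0"
  using inner_iunit_left[of x x] by (simp add: inner_commute)

lemma norm_iunit[simp]: "norm (iunit (x::'h::chilbert)) = norm x"
  by (simp add: norm_eq_sqrt_inner inner_iunit)

lemma bop_bl: "a \<in> bop \<Longrightarrow> bounded_linear a" by (simp add: bop_def)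
lemma bop_add: "a \<in> bop \<Longrightarrow> a (x + y) = a x + a y"
  by (simp add: bop_def linear_simps)
lemma bop_diff: "a \<in> bop \<Longrightarrow> a (x - y) = a x - a y"
  by (simp add: bop_def linear_simps)
lemma bop_minus: "a \<in> bop \<Longrightarrow> a (- x) = - a x"
  by (simp add: bop_def linear_simps)
lemma bop_scaleR: "a \<in> bop \<Longrightarrow> a (r *\<^sub>R x) = r *\<^sub>R a x"
  by (simp add: bop_def linear_simps)
lemma bop_zero: "a \<in> bop \<Longrightarrow> a 0 = 0"
  by (simp add: bop_def linear_simps)
lemma bop_iunit: "a \<in> bop \<Longrightarrow> a (iunit x) = iunit (a x)"
  by (simp add: bop_def)

lemmas bop_simps = bop_add bop_diff bop_minus bop_scaleR bop_zero bop_iunit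

lemma pos_op_iff: "pos_op a \<longleftrightarrow> a \<in> bop \<and> (\<forall>h. inner (a h) (iunit h) = 0 \<and> 0 \<le> inner (a h) h)"
  by (auto simp: pos_op_def cinner_def complex_is_Real_iff)

lemma real_form_sym:
  assumes c: "c \<in> bop" and r: "\<And>h. inner (c h) (iunit h) = 0"
  shows "inner (c u) v = inner (c v) u"
proof -
  have s: "inner (c u) (iunit v) + inner (c v) (iunit u) = 0" for u v
    using r[of "u+v"] r[of u] r[of v]
    by (simp add: bop_simps[OF c] inner_add_left inner_add_right iunit_add)
  from s[of u "iunit v"] show ?thesis
    by (simp add: bop_simps[OF c] iunit_iunit inner_iunit_left inner_iunit inner_commute)
qed

lemma bop_eq_zero:
  assumes c: "c \<in> bop" and r: "\<And>h. inner (c h) (iunit h) = 0" and q: "\<And>h. inner (c h) h = 0"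
  shows "c u = 0"
proof -
  have e: "inner (c u) v + inner (c v) u = 0" for v
    using q[of "u+v"] q[of u] q[of v]
    by (simp add: bop_simps[OF c] inner_add_left inner_add_right)
  hence "inner (c u) v = 0" for v using e[of v] real_form_sym[OF c r, of u v] by linarith
  from this[of "c u"] show ?thesis by simp
qed

lemma adj_pos: assumes p: "pos_op a" shows "adj_op a = a"
proof -
  have a: "a \<in> bop" and r: "\<And>h. inner (a h) (iunit h) = 0" using p by (auto simp: pos_op_iff)
  note sym = real_form_sym[OF a r]
  have 1: "cinner (a x) y = cinner x (a y)" for x y
    using sym[of x y] sym[of x "iunit y"]
    by (simp add: cinner_def inner_commute bop_iunit[OF a])
  show ?thesis unfolding adj_op_def
  proof (rule the_equality)
    show "a \<in> bop \<and> (\<forall>x y. cinner (a x) y = cinner x (a y))" using a 1 by blast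
  next
    fix b assume b: "b \<in> bop \<and> (\<forall>x y. cinner (a x) y = cinner x (b y))"
    have "inner x (b y - a y) = 0" for x y
      using b 1[of x y] by (auto simp: cinner_def inner_diff_right)
    hence "b y - a y = 0" for y by (metis inner_eq_zero_iff)
    thus "b = a" by auto
  qed
qed

lemma iunit_bl: "bounded_linear (iunit :: 'h::chilbert \<Rightarrow> 'h)"
  by (rule bounded_linear_intro[where K=1]) (simp_all add: iunit_add iunit_scaleR)

lemma bop_op_add: "a \<in> bop \<Longrightarrow> b \<in> bop \<Longrightarrow> op_add a b \<in> bop"
  by (auto simp: bop_def op_add_def iunit_add intro: bounded_linear_add)
lemma bop_op_diff: "a \<in> bop \<Longrightarrow> b \<in> bop \<Longrightarrow> op_diff a b \<in> bop"
  by (auto simp: bop_def op_diff_def iunit_diff intro: bounded_linear_sub)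
lemma bop_op_scale: assumes "a \<in> bop" shows "op_scale c a \<in> bop"
proof -
  have a: "bounded_linear a" using assms by (simp add: bop_def)
  have 1: "bounded_linear (\<lambda>h. Re c *\<^sub>R a h)"
    by (rule bounded_linear_compose[OF bounded_linear_scaleR_right a])
  have 2: "bounded_linear (\<lambda>h. iunit (a h))"
    by (rule bounded_linear_compose[OF iunit_bl a])
  have 3: "bounded_linear (\<lambda>h. Im c *\<^sub>R iunit (a h))"
    by (rule bounded_linear_compose[OF bounded_linear_scaleR_right 2])
  have "bounded_linear (\<lambda>h. Re c *\<^sub>R a h + Im c *\<^sub>R iunit (a h))"
    using 1 3 by (rule bounded_linear_add)
  thus ?thesis using assms
    by (auto simp: bop_def op_scale_def cscale_def iunit_add iunit_scaleR iunit_iunit)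
qed
lemma bop_id: "id \<in> bop"
  by (auto simp: bop_def bounded_linear_ident[unfolded id_def[symmetric]])

lemma comm_add: "S \<subseteq> bop \<Longrightarrow> a \<in> commutant S \<Longrightarrow> b \<in> commutant S \<Longrightarrow> op_add a b \<in> commutant S"
  unfolding commutant_def
  apply (auto simp: bop_op_add)
  apply (rule ext)
  apply (drule_tac x=aa in bspec, assumption)+
  by (auto simp: op_add_def bop_add fun_eq_iff)
lemma comm_diff: "S \<subseteq> bop \<Longrightarrow> a \<in> commutant S \<Longrightarrow> b \<in> commutant S \<Longrightarrow> op_diff a b \<in> commutant S"
  unfolding commutant_def
  apply (auto simp: bop_op_diff)
  apply (rule ext)
  apply (drule_tac x=aa in bspec, assumption)+
  apply (auto simp: op_diff_def fun_eq_iff)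
  by (metis bop_diff subsetD)
lemma comm_scale: "S \<subseteq> bop \<Longrightarrow> a \<in> commutant S \<Longrightarrow> op_scale c a \<in> commutant S"
  unfolding commutant_def
  apply (auto simp: bop_op_scale)
  apply (rule ext)
  apply (drule_tac x=aa in bspec, assumption)+
  apply (auto simp: op_scale_def cscale_def fun_eq_iff)
  by (metis bop_add bop_scaleR bop_iunit subsetD)
lemma comm_id: "id \<in> commutant S"
  by (auto simp: commutant_def bop_id)

locale vna = fixes A :: "('h::chilbert \<Rightarrow> 'h) set" assumes vn: "von_neumann_algebra A"
begin
lemma A_bop: "a \<in> A \<Longrightarrow> a \<in> bop" using vn by (auto simp: von_neumann_algebra_def)
lemma A_eq: "A = commutant (commutant A)" using vn by (auto simp: von_neumann_algebra_def)
lemma cA: "commutant A \<subseteq> bop" by (auto simp: commutant_def)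
lemma A_add: "a \<in> A \<Longrightarrow> b \<in> A \<Longrightarrow> op_add a b \<in> A"
  using comm_add[OF cA] A_eq by metis
lemma A_diff: "a \<in> A \<Longrightarrow> b \<in> A \<Longrightarrow> op_diff a b \<in> A"
  using comm_diff[OF cA] A_eq by metis
lemma A_scale: "a \<in> A \<Longrightarrow> op_scale c a \<in> A"
  using comm_scale[OF cA] A_eq by metis
lemma A_id: "id \<in> A"
  using comm_id A_eq by metis
lemma A_zero: "(\<lambda>h. 0) \<in> A"
proof -
  have "op_scale 0 id \<in> A" by (rule A_scale[OF A_id])
  thus ?thesis by (simp add: op_scale_def cscale_def)
qed
end


definition herm :: "('h::chilbert \<Rightarrow> 'h) \<Rightarrow> bool" where
  "herm a \<longleftrightarrow> a \<in> bop \<and> (\<forall>h. inner (a h) (iunit h) = 0)"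

lemma pos_herm: "pos_op a \<longleftrightarrow> herm a \<and> (\<forall>h. 0 \<le> inner (a h) h)"
  by (auto simp: pos_op_iff herm_def)

lemma herm_add: "herm a \<Longrightarrow> herm b \<Longrightarrow> herm (op_add a b)"
  using bop_op_add[of a b] by (auto simp: herm_def op_add_def inner_add_left)
lemma herm_diff: "herm a \<Longrightarrow> herm b \<Longrightarrow> herm (op_diff a b)"
  using bop_op_diff[of a b] by (auto simp: herm_def op_diff_def inner_diff_left)
lemma op_scale_real: "op_scale (complex_of_real c) a = (\<lambda>h. c *\<^sub>R a h)"
  by (simp add: op_scale_def cscale_def)
lemma herm_scale: "herm a \<Longrightarrow> herm (op_scale (complex_of_real c) a)"
  using bop_op_scale[of a "complex_of_real c"] by (auto simp: herm_def op_scale_real)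
lemma herm_id: "herm id" by (simp add: herm_def bop_id)
lemma herm_zero: "herm (\<lambda>h. 0)"
  by (simp add: herm_def bop_def bounded_linear_zero)

lemma op_le_iff: "herm a \<Longrightarrow> herm b \<Longrightarrow> op_le a b \<longleftrightarrow> (\<forall>h. inner (a h) h \<le> inner (b h) h)"
  by (auto simp: op_le_def pos_herm herm_diff) (auto simp: op_diff_def inner_diff_left)

lemma op_le_herm: "op_le a b \<Longrightarrow> herm a \<Longrightarrow> herm b"
proof -
  assume "op_le a b" "herm a"
  hence "herm (op_diff b a)" by (simp add: op_le_def pos_herm)
  from herm_add[OF this \<open>herm a\<close>] show "herm b"
    by (simp add: op_add_def op_diff_def)
qed

lemma adj_herm: assumes p: "herm a" shows "adj_op a = a"
proof -
  have a: "a \<in> bop" and r: "\<And>h. inner (a h) (iunit h) = 0" using p by (auto simp: herm_def)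
  note sym = real_form_sym[OF a r]
  have 1: "cinner (a x) y = cinner x (a y)" for x y
    using sym[of x y] sym[of x "iunit y"]
    by (simp add: cinner_def inner_commute bop_iunit[OF a])
  show ?thesis unfolding adj_op_def
  proof (rule the_equality)
    show "a \<in> bop \<and> (\<forall>x y. cinner (a x) y = cinner x (a y))" using a 1 by blast
  next
    fix b assume b: "b \<in> bop \<and> (\<forall>x y. cinner (a x) y = cinner x (b y))"
    have "inner x (b y - a y) = 0" for x y
      using b 1[of x y] by (auto simp: cinner_def inner_diff_right)
    hence "b y - a y = 0" for y by (metis inner_eq_zero_iff)
    thus "b = a" by auto
  qed
qed

lemma herm_eq: assumes "herm a" "herm b" "\<And>h. inner (a h) h = inner (b h) h" shows "a = b"
proof -
  have c: "herm (op_diff a b)" using assms herm_diff by blast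
  have "op_diff a b u = 0" for u
    by (rule bop_eq_zero) (use c assms(3) in \<open>auto simp: herm_def op_diff_def inner_diff_left\<close>)
  thus ?thesis by (auto simp: op_diff_def fun_eq_iff)
qed

lemma quad_CS:
  fixes a b c :: real
  assumes q: "\<And>t. 0 \<le> a + 2*t*b + t^2*c"
  shows "b^2 \<le> a*c"
proof (cases "c = 0")
  case True
  show ?thesis
  proof (cases "b = 0")
    case False
    have "0 \<le> a + 2*(-(a+1)/(2*b))*b" using q[of "-(a+1)/(2*b)"] True by simp
    also have "\<dots> = -1" using False by (simp add: field_simps)
    finally show ?thesis by simp
  qed (use True q[of 0] in auto)
next
  case False
  have c0: "c \<ge> 0"
  proof (rule ccontr)
    assume "\<not> c \<ge> 0"
    hence c: "c < 0" by simp
    define t where "t = max 1 ((\<bar>a\<bar> + 2*\<bar>b\<bar> + 1) / (-c))"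
    have t1: "t \<ge> 1" by (simp add: t_def)
    have "t \<ge> (\<bar>a\<bar> + 2*\<bar>b\<bar> + 1) / (-c)" by (simp add: t_def)
    hence "t * (-c) \<ge> (\<bar>a\<bar> + 2*\<bar>b\<bar> + 1)" using c by (simp add: field_simps)
    hence "t * (t * (-c)) \<ge> t * (\<bar>a\<bar> + 2*\<bar>b\<bar> + 1)" using t1 by (intro mult_left_mono) auto
    hence "t^2*c \<le> - t * (\<bar>a\<bar> + 2*\<bar>b\<bar> + 1)" by (simp add: power2_eq_square algebra_simps)
    moreover have "a + 2*t*b \<le> t*\<bar>a\<bar> + t*2*\<bar>b\<bar>"
    proof -
      have "a \<le> t*\<bar>a\<bar>" using t1 by (smt (verit) mult_le_cancel_right1 abs_ge_self abs_ge_zero mult_right_mono)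
      moreover have "2*t*b \<le> t*2*\<bar>b\<bar>" using t1 by (smt (verit) abs_ge_self mult_left_mono)
      ultimately show ?thesis by linarith
    qed
    ultimately have "a + 2*t*b + t^2*c \<le> -t" by (simp add: algebra_simps)
    with q[of t] t1 show False by linarith
  qed
  hence c: "c > 0" using False by simp
  have "0 \<le> a + 2*(-b/c)*b + (-b/c)^2*c" by (rule q)
  also have "\<dots> = a - b^2/c" using c by (simp add: power2_eq_square field_simps)
  finally show ?thesis using c by (simp add: field_simps)
qed

lemma pos_CS: assumes p: "pos_op b"
  shows "(inner (b u) v)^2 \<le> inner (b u) u * inner (b v) v"
proof -
  have bb: "b \<in> bop" and r: "\<And>h. inner (b h) (iunit h) = 0" using p by (auto simp: pos_op_iff)
  note sym = real_form_sym[OF bb r]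
  have "0 \<le> inner (b u) u + 2*t*inner (b u) v + t^2 * inner (b v) v" for t
  proof -
    have "0 \<le> inner (b (u + t *\<^sub>R v)) (u + t *\<^sub>R v)" using p by (auto simp: pos_op_iff)
    also have "\<dots> = inner (b u) u + t*inner (b u) v + t * inner (b v) u + t^2 * inner (b v) v"
      by (simp add: bop_simps[OF bb] inner_add_left inner_add_right power2_eq_square algebra_simps)
    finally show ?thesis using sym[of u v] by (simp add: algebra_simps)
  qed
  thus ?thesis by (rule quad_CS)
qed


lemma mat_pos1: "mat_pos (Suc 0) (\<lambda>i j. a) \<longleftrightarrow> pos_op a"
proof
  assume m: "mat_pos (Suc 0) (\<lambda>i j. a)"
  show "pos_op a" unfolding pos_op_def
  proof (intro conjI allI)
    show "a \<in> bop" using m by (simp add: mat_pos_def)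
    fix h
    from m have "let q = cinner (a h) h in q \<in> \<real> \<and> 0 \<le> Re q"
      unfolding mat_pos_def by (drule_tac conjunct2) (drule spec[of _ "\<lambda>_. h"], simp)
    thus "cinner (a h) h \<in> \<real>" "0 \<le> Re (cinner (a h) h)" by (simp_all add: Let_def)
  qed
next
  assume "pos_op a" thus "mat_pos (Suc 0) (\<lambda>i j. a)"
    by (simp add: mat_pos_def pos_op_def Let_def)
qed

lemma op_diff_eq: "op_diff a b = op_add a (op_scale (-1) b)"
  by (simp add: op_diff_def op_add_def op_scale_def cscale_def fun_eq_iff)

locale mk = vna + fixes T assumes mo: "markov_operator A T"
begin
lemma T_A: "a \<in> A \<Longrightarrow> T a \<in> A" using mo by (auto simp: markov_operator_def)
lemma T_add: "a \<in> A \<Longrightarrow> b \<in> A \<Longrightarrow> T (op_add a b) = op_add (T a) (T b)"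
  using mo by (auto simp: markov_operator_def linear_on_def)
lemma T_scale: "a \<in> A \<Longrightarrow> T (op_scale c a) = op_scale c (T a)"
  using mo by (auto simp: markov_operator_def linear_on_def)
lemma T_id: "T id = id" using mo by (auto simp: markov_operator_def)
lemma T_diff: "a \<in> A \<Longrightarrow> b \<in> A \<Longrightarrow> T (op_diff a b) = op_diff (T a) (T b)"
  by (simp add: op_diff_eq T_add T_scale A_scale)
lemma T_pos: assumes "a \<in> A" "pos_op a" shows "pos_op (T a)"
proof -
  have "completely_positive_on A T" using mo by (auto simp: markov_operator_def)
  hence "mat_pos (Suc 0) (\<lambda>i j. a) \<longrightarrow> mat_pos (Suc 0) (\<lambda>i j. T a)"
    unfolding completely_positive_on_def using assms(1)
    by (drule_tac x="Suc 0" in spec, drule_tac x="\<lambda>i j. a" in spec) auto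
  thus ?thesis using assms(2) mat_pos1 by blast
qed
lemma T_normal: "normal_on A T" using mo by (auto simp: markov_operator_def)

lemma Tn_A: "a \<in> A \<Longrightarrow> (T^^n) a \<in> A"
  by (induction n) (auto simp: T_A)
lemma Tn_add: "a \<in> A \<Longrightarrow> b \<in> A \<Longrightarrow> (T^^n) (op_add a b) = op_add ((T^^n) a) ((T^^n) b)"
  by (induction n) (auto simp: T_add Tn_A)
lemma Tn_scale: "a \<in> A \<Longrightarrow> (T^^n) (op_scale c a) = op_scale c ((T^^n) a)"
  by (induction n) (auto simp: T_scale Tn_A)
lemma Tn_diff: "a \<in> A \<Longrightarrow> b \<in> A \<Longrightarrow> (T^^n) (op_diff a b) = op_diff ((T^^n) a) ((T^^n) b)"
  by (induction n) (auto simp: T_diff Tn_A)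
lemma Tn_id: "(T^^n) id = id"
  by (induction n) (auto simp: T_id[unfolded id_def])
lemma Tn_pos: "a \<in> A \<Longrightarrow> pos_op a \<Longrightarrow> pos_op ((T^^n) a)"
  by (induction n) (auto simp: T_pos Tn_A)

end

definition ps :: "(('h::chilbert \<Rightarrow> 'h) \<Rightarrow> ('h \<Rightarrow> 'h)) \<Rightarrow> ('h \<Rightarrow> 'h) \<Rightarrow> nat \<Rightarrow> ('h \<Rightarrow> 'h)" where
  "ps T x N = (\<lambda>h. \<Sum>n<N. (T^^n) x h)"

lemma ps_0: "ps T x 0 = (\<lambda>h. 0)" by (simp add: ps_def)
lemma ps_Suc: "ps T x (Suc N) = op_add (ps T x N) ((T^^N) x)" by (simp add: ps_def op_add_def)

lemma pos_add: "pos_op a \<Longrightarrow> pos_op b \<Longrightarrow> pos_op (op_add a b)"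
  by (auto simp: pos_herm herm_add) (auto simp: op_add_def inner_add_left)
lemma pos_zero: "pos_op (\<lambda>h. 0)" by (simp add: pos_herm herm_zero)

context mk begin

lemma T_zero: "T (\<lambda>h. 0) = (\<lambda>h. 0)"
proof -
  have e: "op_scale 0 a = (\<lambda>h. 0)" for a :: "'a \<Rightarrow> 'a" by (simp add: op_scale_def cscale_def)
  have "T (op_scale 0 (\<lambda>h. 0)) = op_scale 0 (T (\<lambda>h. 0))" by (rule T_scale[OF A_zero])
  thus ?thesis by (simp add: e)
qed

lemma ps_A: "x \<in> A \<Longrightarrow> ps T x N \<in> A"
  by (induction N) (auto simp: ps_0 ps_Suc A_zero A_add Tn_A)
lemma ps_pos: "x \<in> A \<Longrightarrow> pos_op x \<Longrightarrow> pos_op (ps T x N)"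
  by (induction N) (auto simp: ps_0 ps_Suc pos_zero pos_add Tn_pos)
lemma T_ps: "x \<in> A \<Longrightarrow> T (ps T x N) = op_diff (ps T x (Suc N)) x"
proof (induction N)
  case 0 thus ?case by (simp add: ps_0 ps_Suc T_zero op_diff_def op_add_def)
next
  case (Suc N)
  have "T (ps T x (Suc N)) = op_add (T (ps T x N)) (T ((T^^N) x))"
    by (simp only: ps_Suc T_add[OF ps_A[OF Suc.prems] Tn_A[OF Suc.prems]])
  also have "\<dots> = op_diff (ps T x (Suc (Suc N))) x"
    using Suc by (simp add: ps_Suc op_add_def op_diff_def fun_eq_iff)
  finally show ?case .
qed

lemma fwd:
  assumes x: "x \<in> pos_part A" and y: "y \<in> pos_part A"
    and ss: "strong_sums (\<lambda>n. (T^^n) x) y"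
  shows "T y = op_diff y x"
proof -
  have xA: "x \<in> A" and xp: "pos_op x" and yA: "y \<in> A" and yp: "pos_op y"
    using x y by (auto simp: pos_part_def)
  have hx: "herm x" and hy: "herm y" using xp yp by (auto simp: pos_herm)
  have hps: "herm (ps T x N)" for N using ps_pos[OF xA xp] by (auto simp: pos_herm)
  have conv: "(\<lambda>N. ps T x N h) \<longlonglongrightarrow> y h" for h
    using ss by (simp add: strong_sums_def ps_def)
  have qconv: "(\<lambda>N. inner (ps T x N h) h) \<longlonglongrightarrow> inner (y h) h" for h
    by (rule tendsto_inner[OF conv tendsto_const])
  have inc: "incseq (\<lambda>N. inner (ps T x N h) h)" for h
  proof (rule incseq_SucI)
    fix N
    have "0 \<le> inner ((T^^N) x h) h" using Tn_pos[OF xA xp, of N] by (simp add: pos_op_iff)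
    thus "inner (ps T x N h) h \<le> inner (ps T x (Suc N) h) h"
      by (simp add: ps_Suc op_add_def inner_add_left)
  qed
  have le: "inner (ps T x N h) h \<le> inner (y h) h" for N h
    by (rule incseq_le[OF inc qconv])
  have yle: "op_le (ps T x N) y" for N using le hps hy by (simp add: op_le_iff)
  have sup: "is_sup_in A (range (ps T x)) y"
    unfolding is_sup_in_def
  proof (intro conjI ballI impI)
    show "y \<in> self_adjoint_part A" using yA adj_herm[OF hy] by (simp add: self_adjoint_part_def)
    show "op_le d y" if "d \<in> range (ps T x)" for d using that yle by auto
    fix z assume z: "z \<in> self_adjoint_part A" and ub: "\<forall>d\<in>range (ps T x). op_le d z"
    have hz: "herm z" using op_le_herm[of "ps T x 0" z] ub hps by auto
    have "inner (y h) h \<le> inner (z h) h" for h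
    proof (rule LIMSEQ_le_const2[OF qconv])
      show "\<exists>N. \<forall>n\<ge>N. inner (ps T x n h) h \<le> inner (z h) h"
        using ub hps hz by (auto simp: op_le_iff)
    qed
    thus "op_le y z" using hy hz by (simp add: op_le_iff)
  qed
  have dir: "\<forall>a\<in>range (ps T x). \<forall>b\<in>range (ps T x). \<exists>c\<in>range (ps T x). op_le a c \<and> op_le b c"
  proof (intro ballI)
    fix a b assume "a \<in> range (ps T x)" "b \<in> range (ps T x)"
    then obtain i j where ij: "a = ps T x i" "b = ps T x j" by auto
    have "op_le (ps T x k) (ps T x (max i j))" if "k \<le> max i j" for k
      using inc hps that by (simp add: op_le_iff incseq_def)
    hence "op_le a (ps T x (max i j)) \<and> op_le b (ps T x (max i j))" using ij by simp
    thus "\<exists>c\<in>range (ps T x). op_le a c \<and> op_le b c" by blast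
  qed
  have Dpos: "range (ps T x) \<subseteq> pos_part A" using ps_A[OF xA] ps_pos[OF xA xp] by (auto simp: pos_part_def)
  have tsup: "is_sup_in A (T ` range (ps T x)) (T y)"
    using T_normal sup dir Dpos unfolding normal_on_def by blast
  have img: "T ` range (ps T x) = range (\<lambda>N. op_diff (ps T x (Suc N)) x)"
    using T_ps[OF xA] by (auto simp: image_image)
  have hTy: "herm (T y)" using T_pos[OF yA yp] by (simp add: pos_herm)
  have hd: "herm (op_diff (ps T x (Suc N)) x)" for N using hps hx herm_diff by blast
  have hyx: "herm (op_diff y x)" using hy hx herm_diff by blast
  have 1: "inner (y h) h - inner (x h) h \<le> inner (T y h) h" for h
  proof (rule LIMSEQ_le_const2)
    show "(\<lambda>N. inner (ps T x (Suc N) h) h - inner (x h) h) \<longlonglongrightarrow> inner (y h) h - inner (x h) h"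
      by (intro tendsto_diff tendsto_const LIMSEQ_Suc[OF qconv])
    have "op_le (op_diff (ps T x (Suc N)) x) (T y)" for N
      using tsup img unfolding is_sup_in_def by auto
    thus "\<exists>N. \<forall>n\<ge>N. inner (ps T x (Suc n) h) h - inner (x h) h \<le> inner (T y h) h"
      using hd hTy by (auto simp: op_le_iff op_diff_def inner_diff_left)
  qed
  have "op_le (T y) (op_diff y x)"
  proof -
    have "op_diff y x \<in> self_adjoint_part A"
      using A_diff[OF yA xA] adj_herm[OF hyx] by (simp add: self_adjoint_part_def)
    moreover have "\<forall>d\<in>T ` range (ps T x). op_le d (op_diff y x)"
      unfolding img using hd hyx le by (auto simp: op_le_iff op_diff_def inner_diff_left)
    ultimately show ?thesis using tsup unfolding is_sup_in_def by blast
  qed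
  hence 2: "inner (T y h) h \<le> inner (y h) h - inner (x h) h" for h
    using hTy hyx by (auto simp: op_le_iff op_diff_def inner_diff_left)
  show ?thesis
    by (rule herm_eq[OF hTy hyx]) (use 1 2 in \<open>auto simp: op_diff_def inner_diff_left intro: antisym\<close>)
qed

end

context mk begin

lemma Tn_y: assumes xA: "x \<in> A" and yA: "y \<in> A" and e: "T y = op_diff y x"
  shows "(T^^N) y = op_diff y (ps T x N)"
proof (induction N)
  case 0 thus ?case by (simp add: ps_0 op_diff_def)
next
  case (Suc N)
  have "(T^^Suc N) y = T (op_diff y (ps T x N))" using Suc by simp
  also have "\<dots> = op_diff (T y) (T (ps T x N))" by (rule T_diff[OF yA ps_A[OF xA]])
  also have "\<dots> = op_diff y (ps T x (Suc N))"
    by (simp add: e T_ps[OF xA] op_diff_def)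
  finally show ?case .
qed

lemma pot_iff: "y \<in> potentials A T \<longleftrightarrow>
   y \<in> pos_part A \<and> op_diff y (T y) \<in> pos_part A \<and> (\<forall>h. (\<lambda>N. (T^^N) y h) \<longlonglongrightarrow> 0)"
proof
  assume "y \<in> potentials A T"
  then obtain x where y: "y \<in> pos_part A" and tx: "T_summable A T x" and ss: "strong_sums (\<lambda>n. (T ^^ n) x) y"
    by (auto simp: potentials_def)
  have x: "x \<in> pos_part A" using tx by (simp add: T_summable_def)
  have xA: "x \<in> A" and yA: "y \<in> A" using x y by (auto simp: pos_part_def)
  have e: "T y = op_diff y x" by (rule fwd[OF x y ss])
  have "op_diff y (T y) = x" by (simp add: e op_diff_def)
  moreover have "(\<lambda>N. (T^^N) y h) \<longlonglongrightarrow> 0" for h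
  proof -
    have "(\<lambda>N. y h - ps T x N h) \<longlonglongrightarrow> y h - y h"
      using ss by (intro tendsto_diff tendsto_const) (simp add: strong_sums_def ps_def)
    thus ?thesis by (simp add: Tn_y[OF xA yA e] op_diff_def)
  qed
  ultimately show "y \<in> pos_part A \<and> op_diff y (T y) \<in> pos_part A \<and> (\<forall>h. (\<lambda>N. (T^^N) y h) \<longlonglongrightarrow> 0)"
    using y x by simp
next
  assume a: "y \<in> pos_part A \<and> op_diff y (T y) \<in> pos_part A \<and> (\<forall>h. (\<lambda>N. (T^^N) y h) \<longlonglongrightarrow> 0)"
  define x where "x = op_diff y (T y)"
  have yA: "y \<in> A" using a by (simp add: pos_part_def)
  have TyA: "T y \<in> A" using T_A[OF yA] .
  have pe: "ps T x N = op_diff y ((T^^N) y)" for N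
  proof (induction N)
    case 0 thus ?case by (simp add: ps_0 op_diff_def)
  next
    case (Suc N)
    have "(T^^N) x = op_diff ((T^^N) y) ((T^^N) (T y))"
      unfolding x_def by (rule Tn_diff[OF yA TyA])
    also have "(T^^N) (T y) = (T^^Suc N) y" by (simp add: funpow_swap1)
    finally show ?case using Suc by (simp add: ps_Suc op_diff_def op_add_def)
  qed
  have ss: "strong_sums (\<lambda>n. (T ^^ n) x) y"
    unfolding strong_sums_def
  proof
    fix h
    have "(\<lambda>N. y h - (T^^N) y h) \<longlonglongrightarrow> y h - 0"
      using a by (intro tendsto_diff tendsto_const) auto
    thus "(\<lambda>N. \<Sum>n<N. (T ^^ n) x h) \<longlonglongrightarrow> y h"
      using pe by (simp add: ps_def op_diff_def fun_eq_iff)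
  qed
  have "T_summable A T x" using a ss by (auto simp: T_summable_def x_def)
  thus "y \<in> potentials A T" using a ss by (auto simp: potentials_def)
qed

end

lemma form_bound: assumes "a \<in> bop" shows "\<bar>inner (a u) v\<bar> \<le> onorm a * norm u * norm v"
proof -
  have "\<bar>inner (a u) v\<bar> \<le> norm (a u) * norm v" by (rule Cauchy_Schwarz_ineq2)
  also have "\<dots> \<le> onorm a * norm u * norm v"
    using onorm[OF bop_bl[OF assms], of u] by (intro mult_right_mono) auto
  finally show ?thesis .
qed

lemma lim_form:
  assumes b: "\<And>k. op_diff (ys k) y \<in> bop" and e: "(\<lambda>k. op_norm (op_diff (ys k) y)) \<longlonglongrightarrow> 0"
  shows "(\<lambda>k. inner (ys k u) v) \<longlonglongrightarrow> inner (y u) v"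
proof -
  have "(\<lambda>k. inner (op_diff (ys k) y u) v) \<longlonglongrightarrow> 0"
  proof (rule Lim_null_comparison)
    show "\<forall>\<^sub>F k in sequentially. norm (inner (op_diff (ys k) y u) v) \<le> op_norm (op_diff (ys k) y) * (norm u * norm v)"
      using form_bound[OF b] by (simp add: op_norm_def mult.assoc)
    show "(\<lambda>k. op_norm (op_diff (ys k) y) * (norm u * norm v)) \<longlonglongrightarrow> 0"
      by (rule tendsto_mult_left_zero[OF e])
  qed
  hence "(\<lambda>k. inner (op_diff (ys k) y u) v + inner (y u) v) \<longlonglongrightarrow> 0 + inner (y u) v"
    by (intro tendsto_add tendsto_const)
  thus ?thesis by (simp add: op_diff_def inner_diff_left)
qed

context mk begin

lemma Tn_d_bound: assumes dA: "d \<in> A" and hd: "herm d"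
  shows "\<bar>inner ((T^^N) d h) h\<bar> \<le> onorm d * (norm h)^2"
proof -
  define e where "e = onorm d"
  have db: "d \<in> bop" using hd by (simp add: herm_def)
  have fb: "\<bar>inner (d h) h\<bar> \<le> e * (norm h)^2" for h
    using form_bound[OF db, of h h] by (simp add: e_def power2_eq_square mult.assoc)
  have sid: "op_scale (complex_of_real e) id \<in> A" by (rule A_scale[OF A_id])
  have hs: "herm (op_scale (complex_of_real e) id)" by (rule herm_scale[OF herm_id])
  have idf: "inner (op_scale (complex_of_real e) id h) h = e * (norm h)^2" for h
    by (simp add: op_scale_real power2_norm_eq_inner)
  have p1: "pos_op (op_add (op_scale (complex_of_real e) id) d)"
    using herm_add[OF hs hd] fb by (auto simp: pos_herm op_add_def inner_add_left idf abs_le_iff) (smt (verit) fb abs_le_iff)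
  have p2: "pos_op (op_diff (op_scale (complex_of_real e) id) d)"
    using herm_diff[OF hs hd] fb by (auto simp: pos_herm op_diff_def inner_diff_left idf abs_le_iff)
  have t1: "(T^^N) (op_add (op_scale (complex_of_real e) id) d) = op_add (op_scale (complex_of_real e) id) ((T^^N) d)"
    by (simp add: Tn_add[OF sid dA] Tn_scale[OF A_id] Tn_id)
  have t2: "(T^^N) (op_diff (op_scale (complex_of_real e) id) d) = op_diff (op_scale (complex_of_real e) id) ((T^^N) d)"
    by (simp add: Tn_diff[OF sid dA] Tn_scale[OF A_id] Tn_id)
  have "pos_op (op_add (op_scale (complex_of_real e) id) ((T^^N) d))"
    using Tn_pos[OF A_add[OF sid dA] p1, of N] t1 by simp
  hence q1: "0 \<le> e * (norm h)^2 + inner ((T^^N) d h) h"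
    by (simp add: pos_op_iff op_add_def inner_add_left idf)
  have "pos_op (op_diff (op_scale (complex_of_real e) id) ((T^^N) d))"
    using Tn_pos[OF A_diff[OF sid dA] p2, of N] t2 by simp
  hence q2: "0 \<le> e * (norm h)^2 - inner ((T^^N) d h) h"
    by (simp add: pos_op_iff op_diff_def inner_diff_left idf)
  show ?thesis using q1 q2 by (simp add: e_def abs_le_iff)
qed

end

context mk begin

lemma Tn_le: assumes "y \<in> A" "op_diff y (T y) \<in> pos_part A" shows "inner ((T^^N) y h) h \<le> inner (y h) h"
proof -
  have y: "y \<in> A" "op_diff y (T y) \<in> A" "pos_op (op_diff y (T y))"
    using assms by (auto simp: pos_part_def)
  have "inner ((T^^Suc n) y h) h \<le> inner ((T^^n) y h) h" for n
  proof -
    have "pos_op ((T^^n) (op_diff y (T y)))" by (rule Tn_pos[OF y(2,3)])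
    also have "(T^^n) (op_diff y (T y)) = op_diff ((T^^n) y) ((T^^Suc n) y)"
      by (simp add: Tn_diff[OF y(1) T_A[OF y(1)]] funpow_swap1)
    finally show ?thesis by (simp add: pos_op_iff op_diff_def inner_diff_left)
  qed
  hence "decseq (\<lambda>n. inner ((T^^n) y h) h)" by (rule decseq_SucI)
  from decseqD[OF this, of 0 N] show ?thesis by simp
qed

lemma closed_part:
  assumes ys: "\<And>k. ys k \<in> potentials A T" and yA: "y \<in> A"
    and e: "(\<lambda>k. op_norm (op_diff (ys k) y)) \<longlonglongrightarrow> 0"
  shows "y \<in> potentials A T"
proof -
  have ysA: "ys k \<in> A" and ysp: "pos_op (ys k)" for k
    using ys[of k] by (auto simp: potentials_def pos_part_def)
  have dA: "op_diff (ys k) y \<in> A" for k by (rule A_diff[OF ysA yA])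
  have db: "op_diff (ys k) y \<in> bop" for k by (rule A_bop[OF dA])
  have yb: "y \<in> bop" by (rule A_bop[OF yA])
  have im: "inner (y h) (iunit h) = 0" for h
  proof -
    have "(\<lambda>k. inner (ys k h) (iunit h)) \<longlonglongrightarrow> inner (y h) (iunit h)" by (rule lim_form[OF db e])
    moreover have "(\<lambda>k. inner (ys k h) (iunit h)) = (\<lambda>k. 0)" using ysp by (simp add: pos_op_iff)
    ultimately show ?thesis using LIMSEQ_unique tendsto_const by metis
  qed
  have hy: "herm y" using yb im by (simp add: herm_def)
  have py: "pos_op y"
  proof -
    have "0 \<le> inner (y h) h" for h
    proof (rule LIMSEQ_le_const[OF lim_form[OF db e]])
      show "\<exists>N. \<forall>n\<ge>N. 0 \<le> inner (ys n h) h" using ysp by (simp add: pos_op_iff)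
    qed
    thus ?thesis using hy by (simp add: pos_herm)
  qed
  have hys: "herm (ys k)" for k using ysp by (simp add: pos_herm)
  have hd: "herm (op_diff (ys k) y)" for k using herm_diff[OF hys hy] .
  have TN: "(\<lambda>k. inner ((T^^N) (ys k) h) h) \<longlonglongrightarrow> inner ((T^^N) y h) h" for N h
  proof -
    have "(\<lambda>k. inner ((T^^N) (op_diff (ys k) y) h) h) \<longlonglongrightarrow> 0"
    proof (rule Lim_null_comparison)
      show "\<forall>\<^sub>F k in sequentially. norm (inner ((T^^N) (op_diff (ys k) y) h) h) \<le> op_norm (op_diff (ys k) y) * (norm h)^2"
        using Tn_d_bound[OF dA hd] by (simp add: op_norm_def)
      show "(\<lambda>k. op_norm (op_diff (ys k) y) * (norm h)^2) \<longlonglongrightarrow> 0"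
        by (rule tendsto_mult_left_zero[OF e])
    qed
    hence "(\<lambda>k. inner ((T^^N) (op_diff (ys k) y) h) h + inner ((T^^N) y h) h) \<longlonglongrightarrow> 0 + inner ((T^^N) y h) h"
      by (intro tendsto_add tendsto_const)
    thus ?thesis unfolding Tn_diff[OF ysA yA] by (simp add: op_diff_def inner_diff_left)
  qed
  have hTy: "herm (T y)" using T_pos[OF yA py] by (simp add: pos_herm)
  have p2: "op_diff y (T y) \<in> pos_part A"
  proof -
    have "0 \<le> inner (y h) h - inner (T y h) h" for h
    proof (rule LIMSEQ_le_const)
      show "(\<lambda>k. inner (ys k h) h - inner (T (ys k) h) h) \<longlonglongrightarrow> inner (y h) h - inner (T y h) h"
        using tendsto_diff[OF TN[of 0 h] TN[of 1 h]] by simp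
      have "op_diff (ys k) (T (ys k)) \<in> pos_part A" for k using ys[of k] pot_iff by blast
      thus "\<exists>N. \<forall>n\<ge>N. 0 \<le> inner (ys n h) h - inner (T (ys n) h) h"
        by (auto simp: pos_part_def pos_op_iff op_diff_def inner_diff_left)
    qed
    thus ?thesis using herm_diff[OF hy hTy] A_diff[OF yA T_A[OF yA]]
      by (auto simp: pos_part_def pos_herm op_diff_def inner_diff_left)
  qed
  have yp: "y \<in> pos_part A" using yA py by (simp add: pos_part_def)
  have weak: "(\<lambda>N. inner ((T^^N) y h) h) \<longlonglongrightarrow> 0" for h
  proof (rule LIMSEQ_I)
    fix r :: real assume r: "0 < r"
    have "(\<lambda>k. op_norm (op_diff (ys k) y) * (norm h)^2) \<longlonglongrightarrow> 0"
      by (rule tendsto_mult_left_zero[OF e])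
    from order_tendstoD(2)[OF this, of "r/2"] r obtain k where
      k: "op_norm (op_diff (ys k) y) * (norm h)^2 < r/2"
      by (auto simp: eventually_sequentially)
    have "(\<lambda>N. (T^^N) (ys k) h) \<longlonglongrightarrow> 0" using ys[of k] pot_iff by blast
    hence "(\<lambda>N. inner ((T^^N) (ys k) h) h) \<longlonglongrightarrow> inner 0 h" by (intro tendsto_inner tendsto_const)
    from order_tendstoD(2)[OF this, of "r/2"] r obtain M where
      M: "\<And>N. N \<ge> M \<Longrightarrow> inner ((T^^N) (ys k) h) h < r/2"
      by (auto simp: eventually_sequentially)
    have "norm (inner ((T^^N) y h) h - 0) < r" if "N \<ge> M" for N
    proof -
      have nn: "0 \<le> inner ((T^^N) y h) h" using Tn_pos[OF yA py] by (simp add: pos_op_iff)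
      have b: "\<bar>inner ((T^^N) (op_diff (ys k) y) h) h\<bar> \<le> op_norm (op_diff (ys k) y) * (norm h)^2"
        using Tn_d_bound[OF dA hd] by (simp add: op_norm_def)
      have "inner ((T^^N) y h) h = inner ((T^^N) (ys k) h) h - inner ((T^^N) (op_diff (ys k) y) h) h"
        unfolding Tn_diff[OF ysA yA] by (simp add: op_diff_def inner_diff_left)
      thus ?thesis using nn b M[OF that] k by auto
    qed
    thus "\<exists>no. \<forall>n\<ge>no. norm (inner ((T^^n) y h) h - 0) < r" by blast
  qed
  have strong: "(\<lambda>N. (T^^N) y h) \<longlonglongrightarrow> 0" for h
  proof (rule Lim_null_comparison)
    define M where "M = onorm y"
    have M0: "0 \<le> M" using onorm_pos_le[OF bop_bl[OF yb]] by (simp add: M_def)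
    show "\<forall>\<^sub>F N in sequentially. norm ((T^^N) y h) \<le> sqrt (inner ((T^^N) y h) h * M)"
    proof (rule always_eventually, rule allI)
      fix N
      let ?b = "(T^^N) y" let ?v = "(T^^N) y h"
      have pb: "pos_op ?b" using Tn_pos[OF yA py] .
      have q0: "0 \<le> inner (?b h) h" using pb by (simp add: pos_op_iff)
      have cs: "(inner (?b h) ?v)^2 \<le> inner (?b h) h * inner (?b ?v) ?v" by (rule pos_CS[OF pb])
      have "inner (?b ?v) ?v \<le> inner (y ?v) ?v" by (rule Tn_le[OF yA p2])
      also have "\<dots> \<le> M * (norm ?v)^2"
        using form_bound[OF yb, of ?v ?v] by (simp add: M_def power2_eq_square mult.assoc)
      finally have "(norm ?v ^ 2)^2 \<le> inner (?b h) h * (M * (norm ?v)^2)"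
        using cs q0 by (simp add: power2_norm_eq_inner) (meson mult_left_mono order_trans)
      hence "(norm ?v)^2 * (norm ?v)^2 \<le> (inner (?b h) h * M) * (norm ?v)^2"
        by (simp add: power2_eq_square algebra_simps)
      hence "(norm ?v)^2 \<le> inner (?b h) h * M \<or> norm ?v = 0"
      proof (cases "norm ?v = 0")
        case False
        hence "0 < (norm ?v)^2" by simp
        thus ?thesis using mult_right_le_imp_le[OF \<open>(norm ?v)^2 * (norm ?v)^2 \<le> _\<close>] by blast
      qed simp
      thus "norm ?v \<le> sqrt (inner (?b h) h * M)"
        using q0 M0 by (auto intro: real_le_rsqrt)
    qed
    show "(\<lambda>N. sqrt (inner ((T^^N) y h) h * M)) \<longlonglongrightarrow> 0"
      using tendsto_real_sqrt[OF tendsto_mult[OF weak tendsto_const[of M]]] by simp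
  qed
  show ?thesis using pot_iff yp p2 strong by blast
qed
end

lemma pos_scale: "0 \<le> c \<Longrightarrow> pos_op a \<Longrightarrow> pos_op (op_scale (complex_of_real c) a)"
  using herm_scale[of a c] by (auto simp: pos_herm op_scale_real)

context mk begin

lemma pot_add: assumes "y \<in> potentials A T" "z \<in> potentials A T" shows "op_add y z \<in> potentials A T"
proof -
  have y: "y \<in> A" "pos_op y" "op_diff y (T y) \<in> A" "pos_op (op_diff y (T y))" "\<And>h. (\<lambda>N. (T^^N) y h) \<longlonglongrightarrow> 0"
    using assms(1) pot_iff by (auto simp: pos_part_def)
  have z: "z \<in> A" "pos_op z" "op_diff z (T z) \<in> A" "pos_op (op_diff z (T z))" "\<And>h. (\<lambda>N. (T^^N) z h) \<longlonglongrightarrow> 0"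
    using assms(2) pot_iff by (auto simp: pos_part_def)
  have e: "op_diff (op_add y z) (T (op_add y z)) = op_add (op_diff y (T y)) (op_diff z (T z))"
    unfolding T_add[OF y(1) z(1)] by (simp add: op_add_def op_diff_def fun_eq_iff)
  have "(\<lambda>N. (T^^N) (op_add y z) h) \<longlonglongrightarrow> 0" for h
    using tendsto_add[OF y(5)[of h] z(5)[of h]] unfolding Tn_add[OF y(1) z(1)] by (simp add: op_add_def)
  thus ?thesis unfolding pot_iff e using y z
    by (auto simp: pos_part_def A_add pos_add)
qed

lemma pot_scale: assumes "y \<in> potentials A T" "0 \<le> c" shows "op_scale (complex_of_real c) y \<in> potentials A T"
proof -
  have y: "y \<in> A" "pos_op y" "op_diff y (T y) \<in> A" "pos_op (op_diff y (T y))" "\<And>h. (\<lambda>N. (T^^N) y h) \<longlonglongrightarrow> 0"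
    using assms(1) pot_iff by (auto simp: pos_part_def)
  have e: "op_diff (op_scale (complex_of_real c) y) (T (op_scale (complex_of_real c) y)) = op_scale (complex_of_real c) (op_diff y (T y))"
    unfolding T_scale[OF y(1)] by (simp add: op_scale_real op_diff_def fun_eq_iff scaleR_diff_right)
  have "(\<lambda>N. (T^^N) (op_scale (complex_of_real c) y) h) \<longlonglongrightarrow> 0" for h
    using tendsto_scaleR[OF tendsto_const[of c] y(5)[of h]] unfolding Tn_scale[OF y(1)] by (simp add: op_scale_real)
  thus ?thesis unfolding pot_iff e using y assms(2)
    by (auto simp: pos_part_def A_scale pos_scale)
qed

lemma pot_T: assumes "y \<in> potentials A T" shows "T y \<in> potentials A T"
proof -
  have y: "y \<in> A" "pos_op y" "op_diff y (T y) \<in> A" "pos_op (op_diff y (T y))" "\<And>h. (\<lambda>N. (T^^N) y h) \<longlonglongrightarrow> 0"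
    using assms(1) pot_iff by (auto simp: pos_part_def)
  have e: "op_diff (T y) (T (T y)) = T (op_diff y (T y))" by (simp add: T_diff[OF y(1) T_A[OF y(1)]])
  have "(\<lambda>N. (T^^N) (T y) h) \<longlonglongrightarrow> 0" for h
    using LIMSEQ_Suc[OF y(5)[of h]] by (simp add: funpow_swap1)
  thus ?thesis unfolding pot_iff e using y
    by (auto simp: pos_part_def T_A T_pos)
qed

end

theorem corollary3p5:
  fixes A :: "('h::chilbert \<Rightarrow> 'h) set"
    and T :: "('h \<Rightarrow> 'h) \<Rightarrow> ('h \<Rightarrow> 'h)"
  assumes "von_neumann_algebra A"
    and "markov_operator A T"
  shows "potentials A T \<subseteq> pos_part A
    \<and> (\<forall>y\<in>potentials A T. \<forall>z\<in>potentials A T. op_add y z \<in> potentials A T)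
    \<and> (\<forall>y\<in>potentials A T. \<forall>c::real. c \<ge> 0 \<longrightarrow> op_scale (complex_of_real c) y \<in> potentials A T)
    \<and> (\<forall>ys y. (\<forall>k. ys k \<in> potentials A T) \<and> y \<in> A \<and> (\<lambda>k. op_norm (op_diff (ys k) y)) \<longlonglongrightarrow> 0
          \<longrightarrow> y \<in> potentials A T)
    \<and> T ` potentials A T \<subseteq> potentials A T"
proof -
  interpret mk A T using assms by (simp add: mk_def mk_axioms_def vna_def)
  have 1: "potentials A T \<subseteq> pos_part A" by (auto simp: potentials_def)
  have 4: "\<forall>ys y. (\<forall>k. ys k \<in> potentials A T) \<and> y \<in> A \<and> (\<lambda>k. op_norm (op_diff (ys k) y)) \<longlonglongrightarrow> 0
          \<longrightarrow> y \<in> potentials A T"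
    using closed_part by blast
  show ?thesis
    using 1 4 pot_add pot_scale pot_T by blast
qed

end
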